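(* Let $\Gamma((r^S)_{S\subseteq I})$ be a quitting game satisfying $r^i_i=0$ for all $i\in I$. If all players are abnormal (i.e. $I_*=\emptyset$), then for every $\varepsilon>0$ the game has a stationary $\varepsilon$-equilibrium.
   Context: A quitting game $\Gamma((r^S)_{S\subseteq I})$: finite player set $I=[N]$, vectors $r^S\in[-1,1]^N$ for all $S\subseteq I$; at each stage $t\in\mathbb N$ each player chooses to continue or quit; with $t^*$ the first stage at which some player quits and $S^*$ the set of players quitting then ($S^*=\emptyset$ if nobody ever quits), the payoff is $r^{S^*}$. Write $r^i:=r^{\{i\}}$. A (behavior) strategy of player $i$ is a sequence $x_i=(x_i^t)_{t\in\mathbb N}\subset[0,1]$, $x_i^t$ being the probability of quitting at stage $t$ if nobody quit before; it is stationary if $x_i^t$ does not depend on $t$. $\gamma(x):=\mathbb E_x[r^{S^*}]$. A profile $x$ is an $\varepsilon$-equilibrium if $\gamma_i(x)\ge\gamma_i(x_i',x_{-i})-\varepsilon$ for all $i$ and all strategies $x_i'$. Normal players: $I_0:=I$, $I_{l+1}:=\{i\in I_l:\ \exists j\in I_l,\ j\neq i,\ r^j_i\le0\}$, and $I_*:=\bigcap_{l}I_l$. Players in $I_*$ are normal, the others abnormal. *)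

theory Defs
  imports "HOL-Analysis.Analysis"
begin

text \<open>A payoff system r maps a coalition S (the set of quitters)
to a payoff vector r S :: nat \<Rightarrow> real (component i = payoff of player i).
A strategy profile x maps player i and stage t to the probability x i t of quitting at
stage t (stages are indexed by nat, starting at 0).\<close>

definition players :: "nat \<Rightarrow> nat set" where
  "players N = {..<N}"

definition is_strategy :: "(nat \<Rightarrow> real) \<Rightarrow> bool" where
  "is_strategy y \<longleftrightarrow> (\<forall>t. 0 \<le> y t \<and> y t \<le> 1)"

definition is_profile :: "nat \<Rightarrow> (nat \<Rightarrow> nat \<Rightarrow> real) \<Rightarrow> bool" where
  "is_profile N x \<longleftrightarrow> (\<forall>i\<in>players N. is_strategy (x i))"

definition stationary :: "nat \<Rightarrow> (nat \<Rightarrow> nat \<Rightarrow> real) \<Rightarrow> bool" where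
  "stationary N x \<longleftrightarrow> (\<forall>i\<in>players N. \<forall>t. x i t = x i 0)"

definition alive :: "nat \<Rightarrow> (nat \<Rightarrow> nat \<Rightarrow> real) \<Rightarrow> nat \<Rightarrow> real" where
  "alive N x T = (\<Prod>t<T. \<Prod>i\<in>players N. 1 - x i t)"

text \<open>Probability that t* = t and S* = S.\<close>
definition stop_prob :: "nat \<Rightarrow> (nat \<Rightarrow> nat \<Rightarrow> real) \<Rightarrow> nat \<Rightarrow> nat set \<Rightarrow> real" where
  "stop_prob N x t S = alive N x t * (\<Prod>i\<in>S. x i t) * (\<Prod>i\<in>players N - S. 1 - x i t)"

text \<open>Expected payoff vector gamma(x) = E_x[r^{S*}], with S* = {} if nobody ever quits
(probability lim_T alive T).\<close>
definition gamma :: "nat \<Rightarrow> (nat set \<Rightarrow> nat \<Rightarrow> real) \<Rightarrow> (nat \<Rightarrow> nat \<Rightarrow> real) \<Rightarrow> nat \<Rightarrow> real" where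
  "gamma N r x j =
     (\<Sum>t. \<Sum>S\<in>Pow (players N) - {{}}. stop_prob N x t S * r S j)
     + lim (\<lambda>T. alive N x T) * r {} j"

definition eps_equilibrium ::
  "nat \<Rightarrow> (nat set \<Rightarrow> nat \<Rightarrow> real) \<Rightarrow> real \<Rightarrow> (nat \<Rightarrow> nat \<Rightarrow> real) \<Rightarrow> bool" where
  "eps_equilibrium N r \<epsilon> x \<longleftrightarrow> is_profile N x \<and>
     (\<forall>i\<in>players N. \<forall>y. is_strategy y \<longrightarrow> gamma N r (x(i := y)) i \<le> gamma N r x i + \<epsilon>)"

fun Ilev :: "nat \<Rightarrow> (nat set \<Rightarrow> nat \<Rightarrow> real) \<Rightarrow> nat \<Rightarrow> nat set" where
  "Ilev N r 0 = players N"
| "Ilev N r (Suc l) = {i \<in> Ilev N r l. \<exists>j\<in>Ilev N r l. j \<noteq> i \<and> r {j} i \<le> 0}"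

definition normal_players :: "nat \<Rightarrow> (nat set \<Rightarrow> nat \<Rightarrow> real) \<Rightarrow> nat set" where
  "normal_players N r = (\<Inter>l. Ilev N r l)"

end

theory Submission imports Defs begin

definition pr :: "nat set \<Rightarrow> (nat \<Rightarrow> real) \<Rightarrow> nat set \<Rightarrow> real" where
  "pr P z S = (\<Prod>i\<in>S. z i) * (\<Prod>i\<in>P - S. 1 - z i)"

lemma sum_Pow_insert:
  assumes "finite P" "a \<notin> P"
  shows "(\<Sum>S\<in>Pow (insert a P). F S) = (\<Sum>S\<in>Pow P. F S) + (\<Sum>S\<in>Pow P. F (insert a S))"
proof -
  have d: "Pow P \<inter> insert a ` Pow P = {}" using assms by auto
  have i: "inj_on (insert a) (Pow P)" using assms unfolding inj_on_def
    by (metis PowD insert_absorb insert_ident subset_iff)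
  have "(\<Sum>S\<in>Pow (insert a P). F S) = (\<Sum>S\<in>Pow P \<union> insert a ` Pow P. F S)"
    by (simp add: Pow_insert)
  also have "\<dots> = (\<Sum>S\<in>Pow P. F S) + (\<Sum>S\<in>insert a ` Pow P. F S)"
    using assms d by (intro sum.union_disjoint) auto
  also have "(\<Sum>S\<in>insert a ` Pow P. F S) = (\<Sum>S\<in>Pow P. F (insert a S))"
    using i by (simp add: sum.reindex)
  finally show ?thesis .
qed

lemma pr_ins1:
  assumes "finite P" "a \<notin> P" "S \<subseteq> P"
  shows "pr (insert a P) z S = (1 - z a) * pr P z S"
proof -
  have "insert a P - S = insert a (P - S)" using assms by auto
  moreover have "a \<notin> P - S" using assms by auto
  ultimately show ?thesis using assms unfolding pr_def by (simp add: algebra_simps)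
qed

lemma pr_ins2:
  assumes "finite P" "a \<notin> P" "S \<subseteq> P"
  shows "pr (insert a P) z (insert a S) = z a * pr P z S"
proof -
  have "insert a P - insert a S = P - S" using assms by auto
  moreover have "a \<notin> S" "finite S" using assms finite_subset by auto
  ultimately show ?thesis using assms unfolding pr_def by (simp add: algebra_simps)
qed

lemma pr_sum1:
  assumes "finite P"
  shows "(\<Sum>S\<in>Pow P. pr P z S) = 1"
  using prod_add[OF assms, of z "\<lambda>i. 1 - z i"] unfolding pr_def by simp

lemma pr_nonneg:
  assumes "\<forall>m\<in>P. 0 \<le> z m \<and> z m \<le> 1" "S \<subseteq> P"
  shows "0 \<le> pr P z S"
  unfolding pr_def using assms by (intro mult_nonneg_nonneg prod_nonneg) auto

lemma key_arith:
  fixes za e1 e2 ww bb ss :: real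
  assumes "0 \<le> za" "za \<le> 1" "\<bar>e1\<bar> \<le> 2*bb" "\<bar>e2\<bar> \<le> 2*bb" "\<bar>ww\<bar> \<le> 4 * ss"
  shows "\<bar>(1-za)*e1 + za*e2 + za*ww\<bar> \<le> 2*bb + 4*za * ss"
proof -
  have a1: "\<bar>(1-za)*e1\<bar> \<le> (1-za)*(2*bb)"
  proof -
    have "\<bar>(1-za)*e1\<bar> = (1-za)*\<bar>e1\<bar>" using assms(2) by (simp add: abs_mult)
    also have "\<dots> \<le> (1-za)*(2*bb)" using assms(2,3) by (intro mult_left_mono) auto
    finally show ?thesis .
  qed
  have a2: "\<bar>za*e2\<bar> \<le> za*(2*bb)"
  proof -
    have "\<bar>za*e2\<bar> = za*\<bar>e2\<bar>" using assms(1) by (simp add: abs_mult)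
    also have "\<dots> \<le> za*(2*bb)" using assms(1,4) by (intro mult_left_mono) auto
    finally show ?thesis .
  qed
  have a3: "\<bar>za*ww\<bar> \<le> za*(4 * ss)"
  proof -
    have "\<bar>za*ww\<bar> = za*\<bar>ww\<bar>" using assms(1) by (simp add: abs_mult)
    also have "\<dots> \<le> za*(4 * ss)" using assms(1,5) by (intro mult_left_mono) auto
    finally show ?thesis .
  qed
  have t: "\<bar>(1-za)*e1 + za*e2 + za*ww\<bar> \<le> \<bar>(1-za)*e1\<bar> + \<bar>za*e2\<bar> + \<bar>za*ww\<bar>"
    by (rule order_trans[OF abs_triangle_ineq]) (simp add: abs_triangle_ineq)
  have "(1-za)*(2*bb) + za*(2*bb) + za*(4 * ss) = 2*bb + 4*za * ss" by (simp add: algebra_simps)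
  with t a1 a2 a3 show ?thesis by linarith
qed

lemma key:
  assumes "finite P" "\<forall>m\<in>P. 0 \<le> z m \<and> z m \<le> 1" "\<forall>S\<subseteq>P. \<bar>g S\<bar> \<le> 1"
  shows "\<bar>(\<Sum>S\<in>Pow P. pr P z S * g S) - g {} - (\<Sum>m\<in>P. z m * (g {m} - g {}))\<bar>
          \<le> 2 * ((\<Sum>m\<in>P. z m)^2 - (\<Sum>m\<in>P. (z m)^2))"
  using assms
proof (induction P arbitrary: g rule: finite_induct)
  case empty
  then show ?case by (simp add: pr_def)
next
  case (insert a P)
  define h where "h S = g (insert a S)" for S
  define s where "s = (\<Sum>m\<in>P. z m)"
  define B where "B = (\<Sum>m\<in>P. z m)^2 - (\<Sum>m\<in>P. (z m)^2)"
  define E1 where "E1 = (\<Sum>S\<in>Pow P. pr P z S * g S) - g {} - (\<Sum>m\<in>P. z m * (g {m} - g {}))"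
  define E2 where "E2 = (\<Sum>S\<in>Pow P. pr P z S * h S) - h {} - (\<Sum>m\<in>P. z m * (h {m} - h {}))"
  define W where "W = (\<Sum>m\<in>P. z m * (g {a,m} - g {a} - g {m} + g {}))"
  have zP: "\<forall>m\<in>P. 0 \<le> z m \<and> z m \<le> 1" using insert by auto
  have gb: "\<forall>S\<subseteq>P. \<bar>g S\<bar> \<le> 1" using insert.prems by auto
  have e1: "\<bar>E1\<bar> \<le> 2*B" unfolding E1_def B_def using insert.IH[OF zP gb] .
  have hb: "\<forall>S\<subseteq>P. \<bar>h S\<bar> \<le> 1"
  proof (intro allI impI)
    fix S assume "S \<subseteq> P"
    then have "insert a S \<subseteq> insert a P" by auto
    then show "\<bar>h S\<bar> \<le> 1" unfolding h_def using insert.prems(2) by blast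
  qed
  have e2: "\<bar>E2\<bar> \<le> 2*B" unfolding E2_def B_def using insert.IH[OF zP hb] .
  have w: "\<bar>W\<bar> \<le> 4 * s"
  proof -
    have "\<bar>W\<bar> \<le> (\<Sum>m\<in>P. \<bar>z m * (g {a,m} - g {a} - g {m} + g {})\<bar>)" unfolding W_def by (rule sum_abs)
    also have "\<dots> \<le> (\<Sum>m\<in>P. 4 * z m)"
    proof (rule sum_mono)
      fix m assume m: "m \<in> P"
      have "\<bar>g {a,m}\<bar> \<le> 1" "\<bar>g {a}\<bar> \<le> 1" "\<bar>g {m}\<bar> \<le> 1" "\<bar>g {}\<bar> \<le> 1" using insert m by auto
      then have "\<bar>g {a,m} - g {a} - g {m} + g {}\<bar> \<le> 4" by linarith
      moreover have "0 \<le> z m" using zP m by auto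
      ultimately show "\<bar>z m * (g {a,m} - g {a} - g {m} + g {})\<bar> \<le> 4 * z m"
        by (simp add: abs_mult mult_left_mono mult.commute)
    qed
    finally show ?thesis unfolding s_def by (simp add: sum_distrib_left)
  qed
  have za: "0 \<le> z a" "z a \<le> 1" using insert by auto
  have split: "(\<Sum>S\<in>Pow (insert a P). pr (insert a P) z S * g S)
      = (1 - z a) * (\<Sum>S\<in>Pow P. pr P z S * g S) + z a * (\<Sum>S\<in>Pow P. pr P z S * h S)"
  proof -
    have "(\<Sum>S\<in>Pow (insert a P). pr (insert a P) z S * g S)
       = (\<Sum>S\<in>Pow P. pr (insert a P) z S * g S) + (\<Sum>S\<in>Pow P. pr (insert a P) z (insert a S) * g (insert a S))"
      by (rule sum_Pow_insert[OF insert.hyps(1,2)])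
    also have "(\<Sum>S\<in>Pow P. pr (insert a P) z S * g S) = (\<Sum>S\<in>Pow P. (1 - z a) * (pr P z S * g S))"
      by (rule sum.cong) (auto simp: pr_ins1[OF insert.hyps(1,2)])
    also have "(\<Sum>S\<in>Pow P. pr (insert a P) z (insert a S) * g (insert a S)) = (\<Sum>S\<in>Pow P. z a * (pr P z S * h S))"
      by (rule sum.cong) (auto simp: pr_ins2[OF insert.hyps(1,2)] h_def)
    finally show ?thesis by (simp add: sum_distrib_left)
  qed
  have hs: "h {} = g {a}" "\<And>m. h {m} = g {a,m}" unfolding h_def by auto
  have W_eq: "W = (\<Sum>m\<in>P. z m * (h {m} - h {})) - (\<Sum>m\<in>P. z m * (g {m} - g {}))"
    unfolding W_def hs by (subst sum_subtractf[symmetric], rule sum.cong) (auto simp: algebra_simps)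
  have ins1: "(\<Sum>m\<in>insert a P. z m * (g {m} - g {})) = z a * (g {a} - g {}) + (\<Sum>m\<in>P. z m * (g {m} - g {}))"
    using insert.hyps by simp
  have "(\<Sum>S\<in>Pow (insert a P). pr (insert a P) z S * g S) - g {} - (\<Sum>m\<in>insert a P. z m * (g {m} - g {}))
      = (1-z a)*E1 + z a*E2 + z a*W"
    unfolding split ins1 E1_def E2_def W_eq hs by algebra
  also have "\<bar>\<dots>\<bar> \<le> 2*B + 4*z a * s" by (rule key_arith[OF za e1 e2 w])
  also have "\<dots> = 2 * ((\<Sum>m\<in>insert a P. z m)^2 - (\<Sum>m\<in>insert a P. (z m)^2))"
  proof -
    have "(\<Sum>m\<in>insert a P. z m) = z a + s" "(\<Sum>m\<in>insert a P. (z m)^2) = (z a)^2 + (\<Sum>m\<in>P. (z m)^2)"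
      using insert.hyps unfolding s_def by simp_all
    then show ?thesis unfolding B_def s_def by (simp add: power2_eq_square algebra_simps)
  qed
  finally show ?case .
qed


definition Xs :: "nat \<Rightarrow> (nat set \<Rightarrow> nat \<Rightarrow> real) \<Rightarrow> (nat \<Rightarrow> nat \<Rightarrow> real) \<Rightarrow> nat \<Rightarrow> nat \<Rightarrow> real" where
  "Xs N r z t j = (\<Sum>S\<in>Pow (players N) - {{}}. pr (players N) (\<lambda>i. z i t) S * r S j)"

lemma finite_players[simp]: "finite (players N)" by (simp add: players_def)

lemma alive_0[simp]: "alive N z 0 = 1" by (simp add: alive_def)

lemma alive_Suc: "alive N z (Suc t) = alive N z t * (\<Prod>i\<in>players N. 1 - z i t)"
  by (simp add: alive_def)

lemma inner_eq: "(\<Sum>S\<in>Pow (players N) - {{}}. stop_prob N z t S * r S j) = alive N z t * Xs N r z t j"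
  unfolding Xs_def stop_prob_def pr_def by (simp add: sum_distrib_left mult.assoc)

lemma pr_empty: "pr P z {} = (\<Prod>i\<in>P. 1 - z i)" by (simp add: pr_def)

lemma Xs_key:
  assumes z: "\<forall>m\<in>players N. 0 \<le> z m t \<and> z m t \<le> 1"
    and bounded: "\<And>S i. S \<subseteq> players N \<Longrightarrow> i \<in> players N \<Longrightarrow> -1 \<le> r S i \<and> r S i \<le> 1"
    and j: "j \<in> players N"
  shows "\<bar>Xs N r z t j - (\<Sum>m\<in>players N. z m t * r {m} j)\<bar>
     \<le> 2 * ((\<Sum>m\<in>players N. z m t)^2 - (\<Sum>m\<in>players N. (z m t)^2))"
proof -
  define P where "P = players N"
  define g where "g S = (if S = {} then 0 else r S j)" for S
  have gb: "\<forall>S\<subseteq>P. \<bar>g S\<bar> \<le> 1" unfolding g_def P_def using bounded j by (auto simp: abs_le_iff)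
  have "(\<Sum>S\<in>Pow P. pr P (\<lambda>i. z i t) S * g S) = pr P (\<lambda>i. z i t) {} * g {} + (\<Sum>S\<in>Pow P - {{}}. pr P (\<lambda>i. z i t) S * g S)"
    by (rule sum.remove) (auto simp: P_def)
  also have "(\<Sum>S\<in>Pow P - {{}}. pr P (\<lambda>i. z i t) S * g S) = Xs N r z t j"
    unfolding Xs_def P_def g_def by (rule sum.cong) auto
  finally have X: "(\<Sum>S\<in>Pow P. pr P (\<lambda>i. z i t) S * g S) = Xs N r z t j" by (simp add: g_def)
  have K: "\<bar>(\<Sum>S\<in>Pow P. pr P (\<lambda>i. z i t) S * g S) - g {} - (\<Sum>m\<in>P. z m t * (g {m} - g {}))\<bar>
          \<le> 2 * ((\<Sum>m\<in>P. z m t)^2 - (\<Sum>m\<in>P. (z m t)^2))"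
    by (rule key) (use z gb in \<open>auto simp: P_def\<close>)
  have e: "(\<Sum>m\<in>P. z m t * (g {m} - g {})) = (\<Sum>m\<in>P. z m t * r {m} j)" "g {} = 0"
    by (simp_all add: g_def)
  show ?thesis using K unfolding e(1) unfolding X e(2) unfolding P_def by simp
qed

lemma Xs_abs:
  assumes z: "\<forall>m\<in>players N. 0 \<le> z m t \<and> z m t \<le> 1"
    and bounded: "\<And>S i. S \<subseteq> players N \<Longrightarrow> i \<in> players N \<Longrightarrow> -1 \<le> r S i \<and> r S i \<le> 1"
    and j: "j \<in> players N"
  shows "\<bar>Xs N r z t j\<bar> \<le> 1 - (\<Prod>i\<in>players N. 1 - z i t)"
proof -
  define P where "P = players N"
  have "\<bar>Xs N r z t j\<bar> \<le> (\<Sum>S\<in>Pow P - {{}}. \<bar>pr P (\<lambda>i. z i t) S * r S j\<bar>)"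
    unfolding Xs_def P_def by (rule sum_abs)
  also have "\<dots> \<le> (\<Sum>S\<in>Pow P - {{}}. pr P (\<lambda>i. z i t) S)"
  proof (rule sum_mono)
    fix S assume S: "S \<in> Pow P - {{}}"
    have p: "0 \<le> pr P (\<lambda>i. z i t) S" using S z by (intro pr_nonneg) (auto simp: P_def)
    have "\<bar>r S j\<bar> \<le> 1" using bounded[of S j] S j by (auto simp: P_def abs_le_iff)
    then show "\<bar>pr P (\<lambda>i. z i t) S * r S j\<bar> \<le> pr P (\<lambda>i. z i t) S"
      using p by (simp add: abs_mult mult_left_le)
  qed
  also have "\<dots> = 1 - pr P (\<lambda>i. z i t) {}"
  proof -
    have "(\<Sum>S\<in>Pow P. pr P (\<lambda>i. z i t) S) = pr P (\<lambda>i. z i t) {} + (\<Sum>S\<in>Pow P - {{}}. pr P (\<lambda>i. z i t) S)"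
      by (rule sum.remove) (auto simp: P_def)
    then show ?thesis using pr_sum1[of P] by (simp add: P_def)
  qed
  finally show ?thesis by (simp add: pr_empty P_def)
qed

lemma prod_01:
  assumes "\<forall>m\<in>A. 0 \<le> f m \<and> f m \<le> (1::real)"
  shows "0 \<le> (\<Prod>m\<in>A. f m) \<and> (\<Prod>m\<in>A. f m) \<le> 1"
  using assms by (auto intro: prod_nonneg prod_le_1)

definition is_prof :: "nat \<Rightarrow> (nat \<Rightarrow> nat \<Rightarrow> real) \<Rightarrow> bool" where
  "is_prof N z \<longleftrightarrow> (\<forall>m\<in>players N. \<forall>t. 0 \<le> z m t \<and> z m t \<le> 1)"

lemma alive_props:
  assumes "is_prof N z"
  shows "0 \<le> alive N z t" "alive N z (Suc t) \<le> alive N z t" "alive N z t \<le> 1"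
proof -
  have q: "0 \<le> (\<Prod>i\<in>players N. 1 - z i t) \<and> (\<Prod>i\<in>players N. 1 - z i t) \<le> 1" for t
    using assms unfolding is_prof_def by (intro prod_01) auto
  show a: "0 \<le> alive N z t" for t
    by (induction t) (simp_all add: alive_Suc q)
  show d: "alive N z (Suc t) \<le> alive N z t" for t
    unfolding alive_Suc using a[of t] q[of t] by (simp add: mult_left_le)
  show "alive N z t \<le> 1"
    by (induction t) (auto intro: order_trans[OF d])
qed

lemma gamma_setup:
  assumes z: "is_prof N z"
    and bounded: "\<And>S i. S \<subseteq> players N \<Longrightarrow> i \<in> players N \<Longrightarrow> -1 \<le> r S i \<and> r S i \<le> 1"
    and j: "j \<in> players N"
  obtains L where "alive N z \<longlonglongrightarrow> L" "0 \<le> L" "L \<le> 1" "\<forall>t. L \<le> alive N z t"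
    "summable (\<lambda>t. alive N z t * Xs N r z t j)"
    "gamma N r z j = (\<Sum>t. alive N z t * Xs N r z t j) + L * r {} j"
proof -
  have dec: "decseq (alive N z)" using alive_props(2)[OF z] by (simp add: decseq_SucI)
  obtain L where L: "alive N z \<longlonglongrightarrow> L" "\<forall>i. L \<le> alive N z i"
    using decseq_convergent[OF dec, of 0] alive_props(1)[OF z] by blast
  have L0: "0 \<le> L" using L(1) alive_props(1)[OF z] by (intro LIMSEQ_le_const) auto
  have L1: "L \<le> 1" using L(2)[rule_format, of 0] by simp
  have sm: "summable (\<lambda>t. alive N z t * Xs N r z t j)"
  proof (rule summable_comparison_test)
    show "summable (\<lambda>t. alive N z t - alive N z (Suc t))" by (rule telescope_summable'[OF L(1)])
    show "\<exists>NN. \<forall>n\<ge>NN. norm (alive N z n * Xs N r z n j) \<le> alive N z n - alive N z (Suc n)"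
    proof (intro exI allI impI)
      fix n
      have zz: "\<forall>m\<in>players N. 0 \<le> z m n \<and> z m n \<le> 1" using z by (auto simp: is_prof_def)
      have "norm (alive N z n * Xs N r z n j) = alive N z n * \<bar>Xs N r z n j\<bar>"
        using alive_props(1)[OF z] by (simp add: abs_mult)
      also have "\<dots> \<le> alive N z n * (1 - (\<Prod>i\<in>players N. 1 - z i n))"
        by (rule mult_left_mono[OF Xs_abs[of N z n r j, OF zz bounded j] alive_props(1)[OF z]])
      also have "\<dots> = alive N z n - alive N z (Suc n)" by (simp add: alive_Suc algebra_simps)
      finally show "norm (alive N z n * Xs N r z n j) \<le> alive N z n - alive N z (Suc n)" .
    qed
  qed
  have "gamma N r z j = (\<Sum>t. alive N z t * Xs N r z t j) + L * r {} j"
    unfolding gamma_def inner_eq using limI[OF L(1)] by simp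
  then show ?thesis using that L L0 L1 sm by blast
qed


lemma dev_bounds:
  fixes w :: "nat \<Rightarrow> real" and y :: "nat \<Rightarrow> real"
  assumes w: "\<forall>m\<in>players N. 0 \<le> w m \<and> w m \<le> 1"
    and y: "is_strategy y"
    and i: "i \<in> players N"
    and bounded: "\<And>S i. S \<subseteq> players N \<Longrightarrow> i \<in> players N \<Longrightarrow> -1 \<le> r S i \<and> r S i \<le> 1"
    and diag: "\<And>i. i \<in> players N \<Longrightarrow> r {i} i = 0"
  defines "\<rho> \<equiv> (\<Prod>m\<in>players N - {i}. 1 - w m)"
    and "s \<equiv> (\<Sum>m\<in>players N - {i}. w m)"
    and "B1 \<equiv> (\<Sum>m\<in>players N - {i}. w m)^2 - (\<Sum>m\<in>players N - {i}. (w m)^2)"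
    and "c \<equiv> (\<Sum>m\<in>players N - {i}. w m * r {m} i)"
  shows "\<rho> < 1 \<Longrightarrow> gamma N r ((\<lambda>m t. w m)(i := y)) i \<le> max 0 ((c + 2*B1) / (1 - \<rho>)) + 4 * s"
    and "c + 2*B1 \<le> 0 \<Longrightarrow> gamma N r ((\<lambda>m t. w m)(i := y)) i \<le> 4 * s + max 0 (r {} i)"
proof -
  define z where "z = (\<lambda>m t. w m)(i := y)"
  define P where "P = players N"
  define A where "A = alive N z"
  define X where "X t = Xs N r z t i" for t
  have zP: "is_prof N z" unfolding is_prof_def z_def using w y by (auto simp: is_strategy_def)
  have zt: "\<forall>m\<in>players N. 0 \<le> z m t \<and> z m t \<le> 1" for t using zP by (auto simp: is_prof_def)
  have yt: "0 \<le> y t" "y t \<le> 1" for t using y by (auto simp: is_strategy_def)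
  have iP: "i \<in> P" using i by (simp add: P_def)
  have fin: "finite P" by (simp add: P_def)
  have zi: "z i t = y t" "\<And>m. m \<noteq> i \<Longrightarrow> z m t = w m" for t unfolding z_def by auto
  have rho01: "0 \<le> \<rho> \<and> \<rho> \<le> 1" unfolding \<rho>_def using w by (intro prod_01) auto
  have s0: "0 \<le> s" unfolding s_def using w by (intro sum_nonneg) auto
  have sumz: "(\<Sum>m\<in>P. z m t) = y t + s" for t
  proof -
    have "(\<Sum>m\<in>P. z m t) = z i t + (\<Sum>m\<in>P - {i}. z m t)" by (rule sum.remove[OF fin iP])
    also have "(\<Sum>m\<in>P - {i}. z m t) = s" unfolding s_def P_def by (rule sum.cong) (auto simp: zi)
    finally show ?thesis by (simp add: zi)
  qed
  have sumz2: "(\<Sum>m\<in>P. (z m t)^2) = (y t)^2 + (\<Sum>m\<in>P - {i}. (w m)^2)" for t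
  proof -
    have "(\<Sum>m\<in>P. (z m t)^2) = (z i t)^2 + (\<Sum>m\<in>P - {i}. (z m t)^2)" by (rule sum.remove[OF fin iP])
    also have "(\<Sum>m\<in>P - {i}. (z m t)^2) = (\<Sum>m\<in>P - {i}. (w m)^2)" by (rule sum.cong) (auto simp: zi)
    finally show ?thesis by (simp add: zi)
  qed
  have sumzr: "(\<Sum>m\<in>P. z m t * r {m} i) = c" for t
  proof -
    have "(\<Sum>m\<in>P. z m t * r {m} i) = z i t * r {i} i + (\<Sum>m\<in>P - {i}. z m t * r {m} i)" by (rule sum.remove[OF fin iP])
    also have "(\<Sum>m\<in>P - {i}. z m t * r {m} i) = c" unfolding c_def P_def by (rule sum.cong) (auto simp: zi)
    finally show ?thesis using diag[OF i] by simp
  qed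
  have prodz: "(\<Prod>m\<in>P. 1 - z m t) = (1 - y t) * \<rho>" for t
  proof -
    have "(\<Prod>m\<in>P. 1 - z m t) = (1 - z i t) * (\<Prod>m\<in>P - {i}. 1 - z m t)" by (rule prod.remove[OF fin iP])
    also have "(\<Prod>m\<in>P - {i}. 1 - z m t) = \<rho>" unfolding \<rho>_def P_def by (rule prod.cong) (auto simp: zi)
    finally show ?thesis by (simp add: zi)
  qed
  have Xle: "X t \<le> c + 2*B1 + 4 * s * y t" for t
  proof -
    have "\<bar>X t - c\<bar> \<le> 2 * ((y t + s)^2 - ((y t)^2 + (\<Sum>m\<in>P - {i}. (w m)^2)))"
      using Xs_key[of N z t r i, OF zt bounded i] unfolding X_def P_def[symmetric] sumz sumz2 sumzr .
    moreover have "2 * ((y t + s)^2 - ((y t)^2 + (\<Sum>m\<in>P - {i}. (w m)^2))) = 2*B1 + 4 * s * y t"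
      unfolding B1_def s_def P_def by (simp add: power2_eq_square algebra_simps)
    ultimately show ?thesis by linarith
  qed
  have Asuc: "A (Suc t) = A t * ((1 - y t) * \<rho>)" for t
    unfolding A_def alive_Suc prodz[symmetric] P_def by simp
  have A0: "0 \<le> A t" for t unfolding A_def by (rule alive_props(1)[OF zP])
  have Ay: "A t * y t \<le> A t - A (Suc t)" for t
  proof -
    have "A t - A (Suc t) - A t * y t = A t * ((1 - y t) * (1 - \<rho>))" unfolding Asuc by (simp add: algebra_simps)
    moreover have "0 \<le> A t * ((1 - y t) * (1 - \<rho>))" using A0[of t] yt[of t] rho01 by simp
    ultimately show ?thesis by linarith
  qed
  have Arho: "A t * (1 - \<rho>) \<le> A t - A (Suc t)" for t
  proof -
    have "A t - A (Suc t) - A t * (1 - \<rho>) = A t * (y t * \<rho>)" unfolding Asuc by (simp add: algebra_simps)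
    moreover have "0 \<le> A t * (y t * \<rho>)" using A0[of t] yt[of t] rho01 by simp
    ultimately show ?thesis by linarith
  qed
  have tel: "(\<Sum>t<n. A t - A (Suc t)) \<le> 1" for n
    unfolding sum_lessThan_telescope' using A0[of n] by (simp add: A_def)
  have SAy: "(\<Sum>t<n. A t * y t) \<le> 1" for n
  proof -
    have "(\<Sum>t<n. A t * y t) \<le> (\<Sum>t<n. A t - A (Suc t))" by (rule sum_mono) (rule Ay)
    then show ?thesis using tel[of n] by linarith
  qed
  have SArho: "(1 - \<rho>) * (\<Sum>t<n. A t) \<le> 1" for n
  proof -
    have "(\<Sum>t<n. A t * (1 - \<rho>)) \<le> (\<Sum>t<n. A t - A (Suc t))" by (rule sum_mono) (rule Arho)
    moreover have "(\<Sum>t<n. A t * (1 - \<rho>)) = (1 - \<rho>) * (\<Sum>t<n. A t)"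
      by (metis mult.commute sum_distrib_right)
    ultimately show ?thesis using tel[of n] by linarith
  qed
  have part: "(\<Sum>t<n. A t * X t) \<le> (c + 2*B1) * (\<Sum>t<n. A t) + 4 * s * (\<Sum>t<n. A t * y t)" for n
  proof -
    have "(\<Sum>t<n. A t * X t) \<le> (\<Sum>t<n. A t * (c + 2*B1 + 4 * s * y t))"
      by (rule sum_mono) (rule mult_left_mono[OF Xle A0])
    also have "\<dots> = (c + 2*B1) * (\<Sum>t<n. A t) + 4 * s * (\<Sum>t<n. A t * y t)"
      by (simp add: algebra_simps sum.distrib sum_distrib_left)
    finally show ?thesis .
  qed
  have part2: "4 * s * (\<Sum>t<n. A t * y t) \<le> 4 * s" for n
    using mult_left_mono[OF SAy[of n], of "4 * s"] s0 by simp
  obtain L where L: "alive N z \<longlonglongrightarrow> L" "0 \<le> L" "L \<le> 1" "\<forall>t. L \<le> alive N z t"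
    "summable (\<lambda>t. alive N z t * Xs N r z t i)"
    "gamma N r z i = (\<Sum>t. alive N z t * Xs N r z t i) + L * r {} i"
    using gamma_setup[of N z r i, OF zP bounded i] by blast
  have sm: "summable (\<lambda>t. A t * X t)" using L(5) unfolding A_def X_def .
  have g: "gamma N r z i = (\<Sum>t. A t * X t) + L * r {} i" using L(6) unfolding A_def X_def .
  show "gamma N r ((\<lambda>m t. w m)(i := y)) i \<le> max 0 ((c + 2*B1) / (1 - \<rho>)) + 4 * s" if rl: "\<rho> < 1"
  proof -
    have pos: "0 < 1 - \<rho>" using rl by simp
    have L0: "L = 0"
    proof (rule ccontr)
      assume "L \<noteq> 0"
      then have Lp: "0 < L" using L(2) by simp
      obtain n :: nat where n: "1 / ((1 - \<rho>) * L) < real n" using reals_Archimedean2 by blast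
      have "(\<Sum>t<n. L) \<le> (\<Sum>t<n. A t)"
        by (rule sum_mono) (use L(4) in \<open>simp add: A_def\<close>)
      then have "real n * L \<le> (\<Sum>t<n. A t)" by simp
      then have "(1 - \<rho>) * (real n * L) \<le> 1" using SArho[of n] pos
        by (meson mult_left_mono less_imp_le order_trans)
      moreover have "1 < (1 - \<rho>) * L * real n" using n pos Lp by (simp add: field_simps)
      ultimately show False by (simp add: algebra_simps)
    qed
    have "(\<Sum>t. A t * X t) \<le> max 0 ((c + 2*B1) / (1 - \<rho>)) + 4 * s"
    proof (rule suminf_le_const[OF sm])
      fix n
      have "(c + 2*B1) * (\<Sum>t<n. A t) \<le> max 0 (c + 2*B1) * (\<Sum>t<n. A t)"
        by (rule mult_right_mono) (auto intro: sum_nonneg A0)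
      also have "\<dots> \<le> max 0 (c + 2*B1) * (1 / (1 - \<rho>))"
        using SArho[of n] pos by (intro mult_left_mono) (auto simp: field_simps)
      also have "\<dots> = max 0 ((c + 2*B1) / (1 - \<rho>))"
        using pos by (auto simp: max_def field_simps)
      finally show "(\<Sum>t<n. A t * X t) \<le> max 0 ((c + 2*B1) / (1 - \<rho>)) + 4 * s"
        using part[of n] part2[of n] by linarith
    qed
    then show ?thesis using g L0 unfolding z_def by simp
  qed
  show "gamma N r ((\<lambda>m t. w m)(i := y)) i \<le> 4 * s + max 0 (r {} i)" if cn: "c + 2*B1 \<le> 0"
  proof -
    have "(\<Sum>t. A t * X t) \<le> 4 * s"
    proof (rule suminf_le_const[OF sm])
      fix n
      have "(c + 2*B1) * (\<Sum>t<n. A t) \<le> 0"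
        using cn by (intro mult_nonpos_nonneg) (auto intro: sum_nonneg A0)
      then show "(\<Sum>t<n. A t * X t) \<le> 4 * s" using part[of n] part2[of n] by linarith
    qed
    moreover have "L * r {} i \<le> max 0 (r {} i)"
    proof (cases "r {} i \<le> 0")
      case True then show ?thesis using L(2) by (simp add: mult_nonneg_nonpos)
      next
      case False then show ?thesis using L(3) by (simp add: mult_left_le_one_le)
    qed
    ultimately show ?thesis using g unfolding z_def by simp
  qed
qed


lemma prof_bound:
  fixes w :: "nat \<Rightarrow> real"
  assumes w: "\<forall>m\<in>players N. 0 \<le> w m \<and> w m \<le> 1"
    and j: "j \<in> players N"
    and bounded: "\<And>S i. S \<subseteq> players N \<Longrightarrow> i \<in> players N \<Longrightarrow> -1 \<le> r S i \<and> r S i \<le> 1"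
    and rl: "(\<Prod>m\<in>players N. 1 - w m) < 1"
  shows "gamma N r (\<lambda>m t. w m) j \<ge>
     ((\<Sum>m\<in>players N. w m * r {m} j) - 2 * ((\<Sum>m\<in>players N. w m)^2 - (\<Sum>m\<in>players N. (w m)^2)))
       / (1 - (\<Prod>m\<in>players N. 1 - w m))"
proof -
  define \<rho> where "\<rho> = (\<Prod>m\<in>players N. 1 - w m)"
  define z where "z = (\<lambda>(m::nat) (t::nat). w m)"
  define X0 where "X0 = Xs N r z 0 j"
  have r0: "0 \<le> \<rho>" unfolding \<rho>_def using w by (intro prod_nonneg) auto
  have r1: "\<rho> < 1" using rl unfolding \<rho>_def .
  have Al: "alive N z t = \<rho> ^ t" for t
    by (induction t) (simp_all add: alive_Suc z_def \<rho>_def)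
  have Xc: "Xs N r z t j = X0" for t unfolding X0_def Xs_def z_def by simp
  have g: "gamma N r z j = (\<Sum>t. \<rho> ^ t * X0) + lim (\<lambda>T. \<rho> ^ T) * r {} j"
    unfolding gamma_def inner_eq Al Xc ..
  have "(\<Sum>t. \<rho> ^ t * X0) = (\<Sum>t. \<rho> ^ t) * X0"
    by (rule suminf_mult2[symmetric]) (rule summable_geometric, use r0 r1 in simp)
  also have "\<dots> = X0 / (1 - \<rho>)" using r0 r1 suminf_geometric[of \<rho>] by simp
  finally have g2: "gamma N r z j = X0 / (1 - \<rho>)"
    using g limI[OF LIMSEQ_power_zero[of \<rho>]] r0 r1 by simp
  have zt: "\<forall>m\<in>players N. 0 \<le> z m 0 \<and> z m 0 \<le> 1" using w unfolding z_def by simp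
  have "\<bar>X0 - (\<Sum>m\<in>players N. z m 0 * r {m} j)\<bar>
     \<le> 2 * ((\<Sum>m\<in>players N. z m 0)^2 - (\<Sum>m\<in>players N. (z m 0)^2))"
    unfolding X0_def by (rule Xs_key[of N z 0 r j, OF zt bounded j])
  then have "X0 \<ge> (\<Sum>m\<in>players N. w m * r {m} j) - 2 * ((\<Sum>m\<in>players N. w m)^2 - (\<Sum>m\<in>players N. (w m)^2))"
    unfolding z_def by simp
  then show ?thesis using g2 r1 unfolding z_def \<rho>_def[symmetric]
    by (simp add: divide_right_mono)
qed


fun lev :: "nat set \<Rightarrow> (nat set \<Rightarrow> nat \<Rightarrow> real) \<Rightarrow> nat \<Rightarrow> nat set" where
  "lev P r 0 = P"
| "lev P r (Suc l) = {i \<in> lev P r l. \<exists>j\<in>lev P r l. j \<noteq> i \<and> r {j} i \<le> 0}"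

lemma Ilev_lev: "Ilev N r l = lev (players N) r l" by (induction l) simp_all

lemma lev_mono: "P' \<subseteq> P \<Longrightarrow> lev P' r l \<subseteq> lev P r l"
  by (induction l) auto

lemma lev_anti: "l \<le> m \<Longrightarrow> lev P r m \<subseteq> lev P r l"
proof (induction rule: dec_induct)
  case base then show ?case by simp
next
  case (step n) then show ?case by auto
qed

lemma good_exists:
  assumes "finite P" "P \<noteq> {}" "(\<Inter>l. lev P r l) = {}"
  shows "\<exists>k\<in>P. \<forall>j\<in>P. j \<noteq> k \<longrightarrow> r {k} j > 0"
proof -
  have ex: "\<exists>l. j \<notin> lev P r l" if "j \<in> P" for j using assms(3) that by auto
  define f where "f j = (LEAST l. j \<notin> lev P r l)" for j
  have f1: "j \<notin> lev P r (f j)" if "j \<in> P" for j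
    unfolding f_def using ex[OF that] by (rule LeastI_ex)
  have f2: "0 < f j" if "j \<in> P" for j
    using f1[OF that] that by (cases "f j") auto
  have f3: "j \<in> lev P r (f j - 1)" if "j \<in> P" for j
  proof -
    have "f j - 1 < f j" using f2[OF that] by simp
    then show ?thesis unfolding f_def using not_less_Least by blast
  qed
  define M where "M = Max (f ` P)"
  have "M \<in> f ` P" unfolding M_def using assms by (intro Max_in) auto
  then obtain k where k: "k \<in> P" "f k = M" by auto
  have kmax: "f j \<le> f k" if "j \<in> P" for j unfolding k(2) M_def using assms that by (intro Max_ge) auto
  show ?thesis
  proof (intro bexI[OF _ k(1)] ballI impI)
    fix j assume j: "j \<in> P" "j \<noteq> k"
    define l where "l = f j - 1"
    have jl: "j \<in> lev P r l" unfolding l_def by (rule f3[OF j(1)])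
    have jn: "j \<notin> lev P r (Suc l)" unfolding l_def using f1[OF j(1)] f2[OF j(1)] by simp
    have "l \<le> f k - 1" unfolding l_def using kmax[OF j(1)] by simp
    then have kl: "k \<in> lev P r l" using lev_anti[of l "f k - 1" P r] f3[OF k(1)] by blast
    show "r {k} j > 0" using jn jl kl j(2) by (auto simp: not_le)
  qed
qed

lemma comb:
  assumes "finite P" "(\<Inter>l. lev P r l) = {}"
  shows "(\<forall>i\<in>P. 0 \<le> r {} i) \<or>
    (\<exists>k\<in>P. (\<forall>j\<in>P. j \<noteq> k \<longrightarrow> 0 \<le> r {k} j) \<and> (r {} k \<le> 0 \<or> (\<exists>q\<in>P. q \<noteq> k \<and> r {q} k \<le> 0)))"
  using assms
proof (induction P rule: finite_psubset_induct)
  case (psubset P)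
  show ?case
  proof (cases "P = {}")
    case True then show ?thesis by simp
  next
    case False
    obtain k where k: "k \<in> P" "\<forall>j\<in>P. j \<noteq> k \<longrightarrow> r {k} j > 0"
      using good_exists[OF psubset.hyps(1) False psubset.prems] by blast
    show ?thesis
    proof (cases "r {} k \<le> 0 \<or> (\<exists>q\<in>P. q \<noteq> k \<and> r {q} k \<le> 0)")
      case True
      have "\<forall>j\<in>P. j \<noteq> k \<longrightarrow> 0 \<le> r {k} j" using k(2) by (auto intro: less_imp_le)
      then have "(\<forall>j\<in>P. j \<noteq> k \<longrightarrow> 0 \<le> r {k} j) \<and> (r {} k \<le> 0 \<or> (\<exists>q\<in>P. q \<noteq> k \<and> r {q} k \<le> 0))"
        using True by (rule conjI)
      then have "\<exists>k\<in>P. (\<forall>j\<in>P. j \<noteq> k \<longrightarrow> 0 \<le> r {k} j) \<and> (r {} k \<le> 0 \<or> (\<exists>q\<in>P. q \<noteq> k \<and> r {q} k \<le> 0))"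
        using k(1) by (rule bexI)
      then show ?thesis by (rule disjI2)
    next
      case False
      then have kl: "0 < r {} k" "\<forall>q\<in>P. q \<noteq> k \<longrightarrow> 0 < r {q} k" by auto
      have sub: "P - {k} \<subset> P" using k(1) by auto
      have lm: "lev (P - {k}) r l \<subseteq> lev P r l" for l by (rule lev_mono) auto
      have e: "(\<Inter>l. lev (P - {k}) r l) = {}"
      proof (rule equals0I)
        fix x assume x: "x \<in> (\<Inter>l. lev (P - {k}) r l)"
        have "x \<in> lev P r l" for l using INT_D[OF x, of l] lm[of l] by (auto simp del: lev.simps)
        then have "x \<in> (\<Inter>l. lev P r l)" by (simp del: lev.simps)
        then show False using psubset.prems by (simp del: lev.simps)
      qed
      from psubset.IH[OF sub e] show ?thesis
      proof
        assume a: "\<forall>i\<in>P - {k}. 0 \<le> r {} i"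
        have "\<forall>i\<in>P. 0 \<le> r {} i"
        proof (intro ballI)
          fix i assume "i \<in> P"
          then show "0 \<le> r {} i" using a kl(1) by (cases "i = k") auto
        qed
        then show ?thesis by (rule disjI1)
      next
        assume "\<exists>k'\<in>P - {k}. (\<forall>j\<in>P - {k}. j \<noteq> k' \<longrightarrow> 0 \<le> r {k'} j) \<and>
            (r {} k' \<le> 0 \<or> (\<exists>q\<in>P - {k}. q \<noteq> k' \<and> r {q} k' \<le> 0))"
        then obtain k' where k': "k' \<in> P - {k}" "\<forall>j\<in>P - {k}. j \<noteq> k' \<longrightarrow> 0 \<le> r {k'} j"
            "r {} k' \<le> 0 \<or> (\<exists>q\<in>P - {k}. q \<noteq> k' \<and> r {q} k' \<le> 0)" by blast
        have "\<forall>j\<in>P. j \<noteq> k' \<longrightarrow> 0 \<le> r {k'} j"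
        proof (intro ballI impI)
          fix j assume "j \<in> P" "j \<noteq> k'"
          then show "0 \<le> r {k'} j"
            using k' kl(2) by (cases "j = k") (auto intro: less_imp_le)
        qed
        moreover have "r {} k' \<le> 0 \<or> (\<exists>q\<in>P. q \<noteq> k' \<and> r {q} k' \<le> 0)"
          using k'(3) by auto
        ultimately have "(\<forall>j\<in>P. j \<noteq> k' \<longrightarrow> 0 \<le> r {k'} j) \<and> (r {} k' \<le> 0 \<or> (\<exists>q\<in>P. q \<noteq> k' \<and> r {q} k' \<le> 0))"
          by (rule conjI)
        moreover have "k' \<in> P" using k'(1) by simp
        ultimately have "\<exists>k\<in>P. (\<forall>j\<in>P. j \<noteq> k \<longrightarrow> 0 \<le> r {k} j) \<and> (r {} k \<le> 0 \<or> (\<exists>q\<in>P. q \<noteq> k \<and> r {q} k \<le> 0))"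
          by (rule bexI)
        then show ?thesis by (rule disjI2)
      qed
    qed
  qed
qed


lemma ws_sum:
  assumes w: "\<And>m. w m = (if m = k then \<eta> else 0) + (if m = q then \<delta> else 0)" and kq: "k \<noteq> q"
    and fin: "finite A"
  shows "(\<Sum>m\<in>A. w m * f m) = (if k \<in> A then \<eta> * f k else 0) + (if q \<in> A then \<delta> * f q else (0::real))"
proof -
  have "(\<Sum>m\<in>A. w m * f m) = (\<Sum>m\<in>A. (if m = k then \<eta> * f k else 0) + (if m = q then \<delta> * f q else 0))"
    by (rule sum.cong) (auto simp: w kq)
  also have "\<dots> = (\<Sum>m\<in>A. (if m = k then \<eta> * f k else 0)) + (\<Sum>m\<in>A. (if m = q then \<delta> * f q else 0))"
    by (rule sum.distrib)
  finally show ?thesis using fin by simp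
qed

lemma ws_prod:
  assumes w: "\<And>m. w m = (if m = k then \<eta> else 0) + (if m = q then \<delta> else 0)" and kq: "k \<noteq> q"
    and fin: "finite A"
  shows "(\<Prod>m\<in>A. 1 - w m) = (if k \<in> A then 1 - \<eta> else 1) * (if q \<in> A then 1 - \<delta> else (1::real))"
proof -
  have "(\<Prod>m\<in>A. 1 - w m) = (\<Prod>m\<in>A. (if m = k then 1 - \<eta> else 1) * (if m = q then 1 - \<delta> else 1))"
    by (rule prod.cong) (auto simp: w kq)
  also have "\<dots> = (\<Prod>m\<in>A. (if m = k then 1 - \<eta> else 1)) * (\<Prod>m\<in>A. (if m = q then 1 - \<delta> else 1))"
    by (rule prod.distrib)
  finally show ?thesis using fin by simp
qed

lemma ar_other:
  fixes \<eta> \<delta> a b D c :: real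
  assumes "0 < \<eta>" "0 \<le> \<delta>" "\<eta> \<le> D" "0 \<le> a" "-1 \<le> b" "c = \<eta> * a + \<delta> * b"
  shows "max 0 ((c + 2 * (2 * \<eta> * \<delta>)) / D) + 4 * (\<eta> + \<delta>) \<le> (c - 2 * (2 * \<eta> * \<delta>)) / D + (\<delta> / \<eta> + 12 * \<delta> + 4 * \<eta>)"
proof -
  have D: "0 < D" using assms by linarith
  have hh: "\<eta> * \<delta> \<le> D * \<delta>" using mult_right_mono[OF assms(3) assms(2)] .
  have t1: "8 * \<eta> * \<delta> / D \<le> 8 * \<delta>"
    using D hh by (simp add: divide_le_eq mult.commute)
  have cd: "- \<delta> \<le> c"
  proof -
    have "0 \<le> \<eta> * a" using assms by simp
    moreover have "- \<delta> \<le> \<delta> * b" using assms mult_left_mono[of "-1" b \<delta>] by simp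
    ultimately show ?thesis using assms(6) by linarith
  qed
  have t2: "(\<delta> + 4 * \<eta> * \<delta>) / D \<le> (\<delta> + 4 * \<eta> * \<delta>) / \<eta>"
    using assms D by (intro divide_left_mono) (auto intro: mult_pos_pos)
  have t3: "(\<delta> + 4 * \<eta> * \<delta>) / \<eta> = \<delta> / \<eta> + 4 * \<delta>" using assms by (simp add: field_simps)
  have e1: "(c + 2 * (2 * \<eta> * \<delta>)) / D = (c - 2 * (2 * \<eta> * \<delta>)) / D + 8 * \<eta> * \<delta> / D"
    using D by (simp add: field_simps)
  have e2: "(c - 2 * (2 * \<eta> * \<delta>)) / D \<ge> - ((\<delta> + 4 * \<eta> * \<delta>) / D)"
    using cd D by (simp add: divide_le_eq field_simps)
  have dn: "0 \<le> \<delta> / \<eta>" using assms by simp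
  show ?thesis
  proof (cases "0 \<le> (c + 2 * (2 * \<eta> * \<delta>)) / D")
    case True
    then have "max 0 ((c + 2 * (2 * \<eta> * \<delta>)) / D) = (c + 2 * (2 * \<eta> * \<delta>)) / D" by simp
    then show ?thesis using t1 e1 dn by (smt (verit))
  next
    case False
    then have "max 0 ((c + 2 * (2 * \<eta> * \<delta>)) / D) = 0" by simp
    then show ?thesis using t2 t3 e2 assms(2) by (smt (verit))
  qed
qed

lemma ar_q:
  fixes \<eta> \<delta> a D :: real
  assumes "0 < \<eta>" "0 \<le> \<delta>" "\<eta> \<le> D" "D \<le> \<eta> + \<delta>" "0 \<le> a" "a \<le> 1"
  shows "max 0 ((\<eta> * a + 2 * 0) / \<eta>) + 4 * \<eta> \<le> (\<eta> * a - 2 * (2 * \<eta> * \<delta>)) / D + (\<delta> / \<eta> + 12 * \<delta> + 4 * \<eta>)"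
proof -
  have D: "0 < D" using assms by linarith
  have m: "max 0 ((\<eta> * a + 2 * 0) / \<eta>) = a" using assms by simp
  have hh: "\<eta> * \<delta> \<le> D * \<delta>" using mult_right_mono[OF assms(3) assms(2)] .
  have t1: "4 * \<eta> * \<delta> / D \<le> 4 * \<delta>"
    using D hh by (simp add: divide_le_eq mult.commute)
  have t2: "a - \<eta> * a / D \<le> \<delta> / \<eta>"
  proof -
    have "a - \<eta> * a / D = a * (D - \<eta>) / D" using D by (simp add: field_simps)
    also have "\<dots> \<le> 1 * \<delta> / D" using assms D
      by (intro divide_right_mono mult_mono) auto
    also have "\<dots> \<le> \<delta> / \<eta>" using assms D by (simp add: divide_left_mono)
    finally show ?thesis .
  qed
  have e: "(\<eta> * a - 2 * (2 * \<eta> * \<delta>)) / D = \<eta> * a / D - 4 * \<eta> * \<delta> / D" using D by (simp add: field_simps)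
  show ?thesis unfolding m e using t1 t2 assms by linarith
qed

lemma ar_k:
  fixes \<eta> \<delta> b D :: real
  assumes "0 < \<eta>" "0 < \<delta>" "\<eta> \<le> D" "-1 \<le> b" "b \<le> 0"
  shows "max 0 ((\<delta> * b + 2 * 0) / \<delta>) + 4 * \<delta> \<le> (\<delta> * b - 2 * (2 * \<eta> * \<delta>)) / D + (\<delta> / \<eta> + 12 * \<delta> + 4 * \<eta>)"
proof -
  have D: "0 < D" using assms by linarith
  have m: "max 0 ((\<delta> * b + 2 * 0) / \<delta>) = 0" using assms by (simp add: max_def)
  have t2: "(\<delta> + 4 * \<eta> * \<delta>) / D \<le> (\<delta> + 4 * \<eta> * \<delta>) / \<eta>"
    using assms D by (intro divide_left_mono) (auto intro: mult_pos_pos)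
  have t3: "(\<delta> + 4 * \<eta> * \<delta>) / \<eta> = \<delta> / \<eta> + 4 * \<delta>" using assms by (simp add: field_simps)
  have bd: "- \<delta> \<le> \<delta> * b" using assms mult_left_mono[of "-1" b \<delta>] by simp
  have e2: "(\<delta> * b - 2 * (2 * \<eta> * \<delta>)) / D \<ge> - ((\<delta> + 4 * \<eta> * \<delta>) / D)"
    using bd D by (simp add: divide_le_eq field_simps)
  show ?thesis unfolding m using t2 t3 e2 assms by linarith
qed


lemma caseB:
  assumes bounded: "\<And>S i. S \<subseteq> players N \<Longrightarrow> i \<in> players N \<Longrightarrow> -1 \<le> r S i \<and> r S i \<le> 1"
    and diag: "\<And>i. i \<in> players N \<Longrightarrow> r {i} i = 0"
    and k: "k \<in> players N" and kq: "k \<noteq> q" and qP: "q \<in> players N \<or> \<delta> = 0"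
    and \<eta>: "0 < \<eta>" "\<eta> \<le> 1/2" and \<delta>: "0 \<le> \<delta>" "\<delta> \<le> 1/2"
    and good: "\<forall>j\<in>players N. j \<noteq> k \<longrightarrow> 0 \<le> r {k} j"
    and cond: "(\<delta> = 0 \<and> r {} k \<le> 0) \<or> (0 < \<delta> \<and> r {q} k \<le> 0)"
    and eps: "\<delta> / \<eta> + 12 * \<delta> + 4 * \<eta> \<le> \<epsilon>"
  shows "eps_equilibrium N r \<epsilon> (\<lambda>m t. (if m = k then \<eta> else 0) + (if m = q then \<delta> else 0))"
proof -
  define w where "w m = (if m = k then \<eta> else 0) + (if m = q then \<delta> else 0)" for m
  have wd: "\<And>m. w m = (if m = k then \<eta> else 0) + (if m = q then \<delta> else 0)" by (simp add: w_def)
  have x_eq: "(\<lambda>m t. (if m = k then \<eta> else 0) + (if m = q then \<delta> else 0)) = (\<lambda>m t. w m)"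
    by (simp add: w_def)
  have wk: "w k = \<eta>" and wq: "w q = \<delta>" using kq by (auto simp: w_def)
  have w01: "\<forall>m\<in>players N. 0 \<le> w m \<and> w m \<le> 1" using \<eta> \<delta> kq by (auto simp: w_def)
  have SA: "(\<Sum>m\<in>A. w m * f m) = (if k \<in> A then \<eta> * f k else 0) + (if q \<in> A then \<delta> * f q else 0)"
    if "finite A" for A f using ws_sum[OF wd kq that] .
  have S1: "(\<Sum>m\<in>A. w m) = (if k \<in> A then \<eta> else 0) + (if q \<in> A then \<delta> else 0)"
    if "finite A" for A using SA[OF that, of "\<lambda>_. 1"] by simp
  have S2: "(\<Sum>m\<in>A. (w m)^2) = (if k \<in> A then \<eta> * \<eta> else 0) + (if q \<in> A then \<delta> * \<delta> else 0)"
    if "finite A" for A using SA[OF that, of w] by (simp add: power2_eq_square wk wq)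
  have PR: "(\<Prod>m\<in>A. 1 - w m) = (if k \<in> A then 1 - \<eta> else 1) * (if q \<in> A then 1 - \<delta> else 1)"
    if "finite A" for A using ws_prod[OF wd kq that] .
  have dq: "(if q \<in> players N then \<delta> * a else 0) = \<delta> * a" for a using qP by auto
  have dq1: "(if q \<in> players N then \<delta> else 0) = \<delta>" using qP by auto
  have dq2: "(if q \<in> players N then 1 - \<delta> else 1) = 1 - \<delta>" using qP by auto
  have epos: "0 \<le> \<epsilon>" using eps \<eta> \<delta> by (smt (verit) divide_nonneg_pos)
  define D where "D = 1 - (1 - \<eta>) * (1 - \<delta>)"
  have D1: "\<eta> \<le> D" unfolding D_def using \<eta> \<delta> by (simp add: algebra_simps mult_left_le)
  have D2: "D \<le> \<eta> + \<delta>" unfolding D_def using \<eta> \<delta> by (simp add: algebra_simps)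
  have rho0: "(\<Prod>m\<in>players N. 1 - w m) = 1 - D" unfolding D_def PR[OF finite_players] using k dq2 by simp
  have prof: "gamma N r (\<lambda>m t. w m) j \<ge> (\<eta> * r {k} j + \<delta> * r {q} j - 2 * (2 * \<eta> * \<delta>)) / D"
    if j: "j \<in> players N" for j
  proof -
    have rl: "(\<Prod>m\<in>players N. 1 - w m) < 1" unfolding rho0 using D1 \<eta> by simp
    have e1: "(\<Sum>m\<in>players N. w m * r {m} j) = \<eta> * r {k} j + \<delta> * r {q} j"
      unfolding SA[OF finite_players] using k dq by simp
    have e2: "(\<Sum>m\<in>players N. w m)^2 - (\<Sum>m\<in>players N. (w m)^2) = 2 * \<eta> * \<delta>"
      unfolding S1[OF finite_players] S2[OF finite_players] using k dq1 qP
      by (auto simp: power2_eq_square algebra_simps)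
    show ?thesis using prof_bound[of N w j r, OF w01 j bounded rl] unfolding e1 e2 rho0 by simp
  qed
  show ?thesis unfolding x_eq eps_equilibrium_def
  proof (intro conjI ballI allI impI)
    show "is_profile N (\<lambda>m t. w m)" using w01 by (simp add: is_profile_def is_strategy_def)
  next
    fix i y assume i: "i \<in> players N" and y: "is_strategy y"
    have finA: "finite (players N - {i})" by simp
    show "gamma N r ((\<lambda>m t. w m)(i := y)) i \<le> gamma N r (\<lambda>m t. w m) i + \<epsilon>"
    proof (cases "i = k")
      case True
      have e_s: "(\<Sum>m\<in>players N - {i}. w m) = \<delta>" unfolding S1[OF finA] using True kq dq1 qP by auto
      have e_B: "(\<Sum>m\<in>players N - {i}. w m)^2 - (\<Sum>m\<in>players N - {i}. (w m)^2) = 0"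
        unfolding S1[OF finA] S2[OF finA] using True kq qP by (auto simp: power2_eq_square)
      have e_c: "(\<Sum>m\<in>players N - {i}. w m * r {m} i) = \<delta> * r {q} k"
        unfolding SA[OF finA] using True kq qP by auto
      have e_r: "(\<Prod>m\<in>players N - {i}. 1 - w m) = 1 - \<delta>"
        unfolding PR[OF finA] using True kq qP by auto
      have pk: "gamma N r (\<lambda>m t. w m) k \<ge> (\<eta> * 0 + \<delta> * r {q} k - 2 * (2 * \<eta> * \<delta>)) / D"
        using prof[OF k] diag[OF k] by simp
      show ?thesis
      proof (cases "\<delta> = 0")
        case d0: True
        have "r {} k \<le> 0" using cond d0 by auto
        have "gamma N r ((\<lambda>m t. w m)(i := y)) i \<le> 4 * \<delta> + max 0 (r {} i)"
          using dev_bounds(2)[of N w y i r, OF w01 y i bounded diag] e_c e_B d0 e_s by simp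
        also have "\<dots> = 0" using d0 True \<open>r {} k \<le> 0\<close> by simp
        finally have "gamma N r ((\<lambda>m t. w m)(i := y)) i \<le> 0" .
        moreover have "0 \<le> gamma N r (\<lambda>m t. w m) i" using pk d0 True by simp
        ultimately show ?thesis using epos by linarith
      next
        case d1: False
        then have dp: "0 < \<delta>" using \<delta> by simp
        have rq: "r {q} k \<le> 0" using cond d1 by auto
        have qin: "q \<in> players N" using qP d1 by auto
        have rq1: "-1 \<le> r {q} k" using bounded[of "{q}" k] qin k by auto
        have "gamma N r ((\<lambda>m t. w m)(i := y)) i \<le> max 0 ((\<delta> * r {q} k + 2 * 0) / \<delta>) + 4 * \<delta>"
          using dev_bounds(1)[of N w y i r, OF w01 y i bounded diag] e_c e_B e_s e_r dp by simp
        also have "\<dots> \<le> (\<delta> * r {q} k - 2 * (2 * \<eta> * \<delta>)) / D + (\<delta> / \<eta> + 12 * \<delta> + 4 * \<eta>)"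
          by (rule ar_k[OF \<eta>(1) dp D1 rq1 rq])
        finally show ?thesis using pk True eps by simp
      qed
    next
      case ik: False
      show ?thesis
      proof (cases "i = q")
        case True
        have qin: "q \<in> players N" using True i by simp
        have e_s: "(\<Sum>m\<in>players N - {i}. w m) = \<eta>" unfolding S1[OF finA] using True kq k by auto
        have e_B: "(\<Sum>m\<in>players N - {i}. w m)^2 - (\<Sum>m\<in>players N - {i}. (w m)^2) = 0"
          unfolding S1[OF finA] S2[OF finA] using True kq k by (auto simp: power2_eq_square)
        have e_c: "(\<Sum>m\<in>players N - {i}. w m * r {m} i) = \<eta> * r {k} q"
          unfolding SA[OF finA] using True kq k by auto
        have e_r: "(\<Prod>m\<in>players N - {i}. 1 - w m) = 1 - \<eta>"
          unfolding PR[OF finA] using True kq k by auto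
        have pq: "gamma N r (\<lambda>m t. w m) q \<ge> (\<eta> * r {k} q + \<delta> * 0 - 2 * (2 * \<eta> * \<delta>)) / D"
          using prof[OF qin] diag[OF qin] by simp
        have a0: "0 \<le> r {k} q" using good qin kq by auto
        have a1: "r {k} q \<le> 1" using bounded[of "{k}" q] qin k by auto
        have "gamma N r ((\<lambda>m t. w m)(i := y)) i \<le> max 0 ((\<eta> * r {k} q + 2 * 0) / \<eta>) + 4 * \<eta>"
          using dev_bounds(1)[of N w y i r, OF w01 y i bounded diag] e_c e_B e_s e_r \<eta> by simp
        also have "\<dots> \<le> (\<eta> * r {k} q - 2 * (2 * \<eta> * \<delta>)) / D + (\<delta> / \<eta> + 12 * \<delta> + 4 * \<eta>)"
          by (rule ar_q[OF \<eta>(1) \<delta>(1) D1 D2 a0 a1])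
        finally show ?thesis using pq True eps by simp
      next
        case iq: False
        define b where "b = (if q \<in> players N then r {q} i else 0)"
        have db: "\<delta> * r {q} i = \<delta> * b" unfolding b_def using qP by auto
        have b1: "-1 \<le> b" unfolding b_def using bounded[of "{q}" i] i by auto
        have e_s: "(\<Sum>m\<in>players N - {i}. w m) = \<eta> + \<delta>" unfolding S1[OF finA] using ik iq kq k qP by auto
        have e_B: "(\<Sum>m\<in>players N - {i}. w m)^2 - (\<Sum>m\<in>players N - {i}. (w m)^2) = 2 * \<eta> * \<delta>"
          unfolding S1[OF finA] S2[OF finA] using ik iq kq k qP by (auto simp: power2_eq_square algebra_simps)
        have e_c: "(\<Sum>m\<in>players N - {i}. w m * r {m} i) = \<eta> * r {k} i + \<delta> * b"
          unfolding SA[OF finA] using ik iq kq k qP db by auto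
        have e_r: "(\<Prod>m\<in>players N - {i}. 1 - w m) = 1 - D"
          unfolding PR[OF finA] D_def using ik iq kq k qP by auto
        have pi: "gamma N r (\<lambda>m t. w m) i \<ge> (\<eta> * r {k} i + \<delta> * b - 2 * (2 * \<eta> * \<delta>)) / D"
          using prof[OF i] db by simp
        have a0: "0 \<le> r {k} i" using good i ik by auto
        have Dp: "0 < D" using D1 \<eta> by simp
        have "gamma N r ((\<lambda>m t. w m)(i := y)) i \<le> max 0 ((\<eta> * r {k} i + \<delta> * b + 2 * (2 * \<eta> * \<delta>)) / D) + 4 * (\<eta> + \<delta>)"
          using dev_bounds(1)[of N w y i r, OF w01 y i bounded diag, unfolded e_B, unfolded e_c e_s e_r] Dp by (simp add: algebra_simps)
        also have "\<dots> \<le> (\<eta> * r {k} i + \<delta> * b - 2 * (2 * \<eta> * \<delta>)) / D + (\<delta> / \<eta> + 12 * \<delta> + 4 * \<eta>)"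
          by (rule ar_other[OF \<eta>(1) \<delta>(1) D1 a0 b1 refl])
        finally show ?thesis using pi eps by simp
      qed
    qed
  qed
qed


lemma zero_gamma:
  shows "gamma N r (\<lambda>m t. 0) i = r {} i"
proof -
  have Al: "alive N (\<lambda>m t. 0) t = 1" for t by (simp add: alive_def)
  have X0: "Xs N r (\<lambda>m t. 0) t i = 0" for t
    unfolding Xs_def pr_def
  proof (rule sum.neutral, intro ballI)
    fix S assume S: "S \<in> Pow (players N) - {{}}"
    then have "finite S" "S \<noteq> {}" using finite_subset[of S "players N"] by auto
    then have "(\<Prod>i\<in>S. (0::real)) = 0" by (simp add: card_gt_0_iff)
    then show "(\<Prod>i\<in>S. (0::real)) * (\<Prod>i\<in>players N - S. 1 - 0) * r S i = 0" by simp
  qed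
  show ?thesis unfolding gamma_def inner_eq Al X0 by simp
qed

theorem lemma2:
  fixes N :: nat and r :: "nat set \<Rightarrow> nat \<Rightarrow> real"
  assumes bounded: "\<And>S i. S \<subseteq> players N \<Longrightarrow> i \<in> players N \<Longrightarrow> -1 \<le> r S i \<and> r S i \<le> 1"
    and diag: "\<And>i. i \<in> players N \<Longrightarrow> r {i} i = 0"
    and all_abnormal: "normal_players N r = {}"
  shows "\<forall>\<epsilon>>0. \<exists>x. stationary N x \<and> eps_equilibrium N r \<epsilon> x"
proof (intro allI impI)
  fix \<epsilon> :: real assume \<epsilon>: "\<epsilon> > 0"
  have nP: "(\<Inter>l. lev (players N) r l) = {}" using all_abnormal unfolding normal_players_def Ilev_lev .
  from comb[OF finite_players nP] show "\<exists>x. stationary N x \<and> eps_equilibrium N r \<epsilon> x"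
  proof
    assume A: "\<forall>i\<in>players N. 0 \<le> r {} i"
    have w01: "\<forall>m\<in>players N. 0 \<le> (0::real) \<and> (0::real) \<le> 1" by simp
    have "eps_equilibrium N r \<epsilon> (\<lambda>m t. 0)"
      unfolding eps_equilibrium_def
    proof (intro conjI ballI allI impI)
      show "is_profile N (\<lambda>m t. 0)" by (simp add: is_profile_def is_strategy_def)
    next
      fix i y assume i: "i \<in> players N" and y: "is_strategy y"
      have "gamma N r ((\<lambda>m t. (\<lambda>_. 0::real) m)(i := y)) i \<le> 4 * 0 + max 0 (r {} i)"
        using dev_bounds(2)[of N "\<lambda>_. 0" y i r, OF w01 y i bounded diag] by simp
      then show "gamma N r ((\<lambda>m t. 0)(i := y)) i \<le> gamma N r (\<lambda>m t. 0) i + \<epsilon>"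
        using A i \<epsilon> zero_gamma[of N r i] by simp
    qed
    moreover have "stationary N (\<lambda>m t. 0)" by (simp add: stationary_def)
    ultimately show ?thesis by blast
  next
    assume "\<exists>k\<in>players N. (\<forall>j\<in>players N. j \<noteq> k \<longrightarrow> 0 \<le> r {k} j) \<and>
      (r {} k \<le> 0 \<or> (\<exists>q\<in>players N. q \<noteq> k \<and> r {q} k \<le> 0))"
    then obtain k where k: "k \<in> players N" "\<forall>j\<in>players N. j \<noteq> k \<longrightarrow> 0 \<le> r {k} j"
      "r {} k \<le> 0 \<or> (\<exists>q\<in>players N. q \<noteq> k \<and> r {q} k \<le> 0)" by blast
    define e where "e = min \<epsilon> 1"
    have e: "0 < e" "e \<le> 1" "e \<le> \<epsilon>" unfolding e_def using \<epsilon> by auto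
    define \<eta> where "\<eta> = e / 8"
    have \<eta>: "0 < \<eta>" "\<eta> \<le> 1/2" unfolding \<eta>_def using e by auto
    obtain q \<delta> where qd: "k \<noteq> q" "q \<in> players N \<or> \<delta> = 0" "0 \<le> \<delta>" "\<delta> \<le> 1/2"
      "(\<delta> = 0 \<and> r {} k \<le> 0) \<or> (0 < \<delta> \<and> r {q} k \<le> 0)"
      "\<delta> / \<eta> + 12 * \<delta> + 4 * \<eta> \<le> \<epsilon>"
    proof (cases "r {} k \<le> 0")
      case True
      show ?thesis
      proof (rule that[of "Suc k" 0])
        show "0 / \<eta> + 12 * 0 + 4 * \<eta> \<le> \<epsilon>" using e unfolding \<eta>_def by simp
      qed (use True in auto)
    next
      case False
      then obtain q where q: "q \<in> players N" "q \<noteq> k" "r {q} k \<le> 0" using k(3) by blast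
      define \<delta> where "\<delta> = \<eta> * e / 8"
      have dpos: "0 < \<delta>" unfolding \<delta>_def using \<eta> e by simp
      have dle: "\<delta> \<le> 1/2" unfolding \<delta>_def \<eta>_def using e by (simp add: field_simps) (smt (verit) mult_le_one)
      have "\<delta> / \<eta> = e / 8" unfolding \<delta>_def using \<eta> by simp
      moreover have "12 * \<delta> \<le> 12 * e / 64" unfolding \<delta>_def \<eta>_def using e
        by (simp add: field_simps)
      ultimately have "\<delta> / \<eta> + 12 * \<delta> + 4 * \<eta> \<le> \<epsilon>" using e unfolding \<eta>_def by linarith
      then show ?thesis using that[of q \<delta>] q dpos dle by auto
    qed
    have "eps_equilibrium N r \<epsilon> (\<lambda>m t. (if m = k then \<eta> else 0) + (if m = q then \<delta> else 0))"
      by (rule caseB[OF bounded diag k(1) qd(1) qd(2) \<eta> qd(3) qd(4) k(2) qd(5) qd(6)])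
    moreover have "stationary N (\<lambda>m t. (if m = k then \<eta> else 0) + (if m = q then \<delta> else 0))"
      by (simp add: stationary_def)
    ultimately show ?thesis by blast
  qed
qed

end
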